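(* Fix $p\in(0,1)$. For each $n$, let $(\xi_{ij})_{i,j\in[n]}$ be i.i.d. Bernoulli$(p)$ random variables and define $$\hat H_n:=\prod_{i=1}^n\frac{\sum_{j=1}^n\xi_{ij}}{np}.$$ Then, as $n\to\infty$, $\hat H_n$ converges weakly to $\exp(X)$ where $X\sim\mathcal N\big(-\tfrac{1-p}{2p},\tfrac{1-p}{p}\big)$.
   Context: $\mathcal N(a,s^2)$ is the normal law with mean $a$ and variance $s^2$. *)

theory Defs
  imports "HOL-Probability.Probability"
begin

definition bernoulli_array :: "nat \<Rightarrow> real \<Rightarrow> (nat \<times> nat \<Rightarrow> bool) pmf" where
  "bernoulli_array n p = Pi_pmf ({..<n} \<times> {..<n}) False (\<lambda>_. bernoulli_pmf p)"

definition H_hat :: "nat \<Rightarrow> real \<Rightarrow> (nat \<times> nat \<Rightarrow> bool) \<Rightarrow> real" where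
  "H_hat n p \<xi> = (\<Prod>i<n. (\<Sum>j<n. of_bool (\<xi> (i, j))) / (real n * p))"

definition H_hat_law :: "real \<Rightarrow> nat \<Rightarrow> real measure" where
  "H_hat_law p n = measure_pmf (map_pmf (H_hat n p) (bernoulli_array n p))"

end

theory Submission
  imports Defs "HOL-Real_Asymp.Real_Asymp"
begin


lemma E_bin_Suc:
  assumes p: "p \<in> {0..1}"
  shows "measure_pmf.expectation (binomial_pmf (Suc n) p) (f::nat\<Rightarrow>real) =
     p * measure_pmf.expectation (binomial_pmf n p) (\<lambda>k. f (Suc k)) +
     (1-p) * measure_pmf.expectation (binomial_pmf n p) f"
proof -
  have eq: "binomial_pmf (Suc n) p = bernoulli_pmf p \<bind> (\<lambda>b. map_pmf (\<lambda>k. (if b then 1 else 0) + k) (binomial_pmf n p))"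
    using binomial_pmf_Suc[OF p] by (simp add: map_pmf_def)
  have "measure_pmf.expectation (binomial_pmf (Suc n) p) f =
     (\<Sum>b\<in>UNIV. pmf (bernoulli_pmf p) b *\<^sub>R measure_pmf.expectation (map_pmf (\<lambda>k. (if b then 1 else 0) + k) (binomial_pmf n p)) f)"
    unfolding eq by (rule pmf_expectation_bind) (use p in \<open>auto intro!: finite_imageI finite_set_pmf_binomial_pmf\<close>)
  also have "\<dots> = p * measure_pmf.expectation (binomial_pmf n p) (\<lambda>k. f (Suc k)) +
     (1-p) * measure_pmf.expectation (binomial_pmf n p) f"
    using p by (simp add: UNIV_bool)
  finally show ?thesis .
qed

lemma E_bin_lin:
  assumes p: "p \<in> {0..1}"
  shows "measure_pmf.expectation (binomial_pmf n p) (\<lambda>k. a * (f::nat\<Rightarrow>real) k + b * g k + c) =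
     a * measure_pmf.expectation (binomial_pmf n p) f + b * measure_pmf.expectation (binomial_pmf n p) g + c"
  using p by (simp add: Bochner_Integration.integral_add measure_pmf.prob_space)

lemma bin_c1:
  assumes p: "p \<in> {0..1}"
  shows "measure_pmf.expectation (binomial_pmf n p) (\<lambda>k. real k - n * p) = 0"
proof (induction n)
  case 0
  then show ?case using p by (simp add: binomial_pmf_0)
next
  case (Suc n)
  have "measure_pmf.expectation (binomial_pmf (Suc n) p) (\<lambda>k. real k - Suc n * p) =
     p * measure_pmf.expectation (binomial_pmf n p) (\<lambda>k. 1 * (real k - n * p) + 0 * (real k - n*p) + (1 - p)) +
     (1-p) * measure_pmf.expectation (binomial_pmf n p) (\<lambda>k. 1 * (real k - n * p) + 0 * (real k - n*p) + (- p))"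
    by (subst E_bin_Suc[OF p]) (simp add: algebra_simps)
  also have "\<dots> = 0" unfolding E_bin_lin[OF p] Suc by (simp add: algebra_simps)
  finally show ?case .
qed

lemma bin_c2:
  assumes p: "p \<in> {0..1}"
  shows "measure_pmf.expectation (binomial_pmf n p) (\<lambda>k. (real k - n * p)^2) = n * p * (1 - p)"
proof (induction n)
  case 0
  then show ?case using p by (simp add: binomial_pmf_0)
next
  case (Suc n)
  have "measure_pmf.expectation (binomial_pmf (Suc n) p) (\<lambda>k. (real k - Suc n * p)^2) =
     p * measure_pmf.expectation (binomial_pmf n p) (\<lambda>k. 1 * (real k - n * p)^2 + (2*(1-p)) * (real k - n*p) + (1 - p)^2) +
     (1-p) * measure_pmf.expectation (binomial_pmf n p) (\<lambda>k. 1 * (real k - n * p)^2 + (-2*p) * (real k - n*p) + p^2)"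
    by (subst E_bin_Suc[OF p]) (simp add: algebra_simps power2_eq_square)
  also have "\<dots> = Suc n * p * (1 - p)" unfolding E_bin_lin[OF p] Suc bin_c1[OF p] 
    by (simp add: algebra_simps power2_eq_square)
  finally show ?case .
qed


lemma ln3_aux:
  fixes a b :: real
  assumes "-1/2 \<le> a" "a \<le> b"
  shows "ln (1+b) - b + b\<^sup>2/2 - b^3 \<le> ln (1+a) - a + a\<^sup>2/2 - a^3"
    and "ln (1+a) - a + a\<^sup>2/2 \<le> ln (1+b) - b + b\<^sup>2/2"
proof -
  have d1: "((\<lambda>t. ln (1+t) - t + t\<^sup>2/2 - t^3) has_real_derivative (t\<^sup>2/(1+t) - 3*t\<^sup>2)) (at t)"
    if "t \<in> {a..b}" for t
  proof -
    have t: "1 + t > 0" using that assms by auto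
    show ?thesis
      using t by (auto intro!: derivative_eq_intros simp: field_simps power2_eq_square)
  qed
  have "- (ln (1+a) - a + a\<^sup>2/2 - a^3) \<le> - (ln (1+b) - b + b\<^sup>2/2 - b^3)"
  proof (rule deriv_nonneg_imp_mono[where g = "\<lambda>t. - (ln (1+t) - t + t\<^sup>2/2 - t^3)"])
    fix t assume t: "t \<in> {a..b}"
    show "((\<lambda>t. - (ln (1+t) - t + t\<^sup>2/2 - t^3)) has_real_derivative - (t\<^sup>2/(1+t) - 3*t\<^sup>2)) (at t)"
      by (intro DERIV_minus d1 t)
    have "1 + t \<ge> 1/2" using t assms by auto
    hence "1/(1+t) \<le> 3" by (simp add: field_simps)
    hence "t\<^sup>2 * (1/(1+t)) \<le> t\<^sup>2 * 3" by (intro mult_left_mono) auto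
    thus "0 \<le> - (t\<^sup>2/(1+t) - 3*t\<^sup>2)" by simp
  qed (use assms in auto)
  thus "ln (1+b) - b + b\<^sup>2/2 - b^3 \<le> ln (1+a) - a + a\<^sup>2/2 - a^3" by simp
  have d2: "((\<lambda>t. ln (1+t) - t + t\<^sup>2/2) has_real_derivative (t\<^sup>2/(1+t))) (at t)"
    if "t \<in> {a..b}" for t
  proof -
    have t: "1 + t > 0" using that assms by auto
    show ?thesis
      using t by (auto intro!: derivative_eq_intros simp: field_simps power2_eq_square)
  qed
  show "ln (1+a) - a + a\<^sup>2/2 \<le> ln (1+b) - b + b\<^sup>2/2"
  proof (rule deriv_nonneg_imp_mono[where g = "\<lambda>t. ln (1+t) - t + t\<^sup>2/2", OF d2])
    fix t assume t: "t \<in> {a..b}"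
    have "1 + t > 0" using t assms by auto
    thus "0 \<le> t\<^sup>2/(1+t)" by simp
  qed (use assms in auto)
qed

lemma ln3:
  fixes y :: real
  assumes "\<bar>y\<bar> \<le> 1/2"
  shows "\<bar>ln (1+y) - y + y\<^sup>2/2\<bar> \<le> \<bar>y\<bar>^3"
proof (cases "y \<ge> 0")
  case True
  from ln3_aux[of 0 y] True have "ln (1+y) - y + y\<^sup>2/2 - y^3 \<le> 0" "0 \<le> ln (1+y) - y + y\<^sup>2/2"
    by auto
  thus ?thesis using True by auto
next
  case False
  from ln3_aux[of y 0] False assms have "0 \<le> ln (1+y) - y + y\<^sup>2/2 - y^3" "ln (1+y) - y + y\<^sup>2/2 \<le> 0"
    by auto
  moreover have "\<bar>y\<bar> ^ 3 = -(y ^ 3)" using False by (simp add: abs_if)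
  ultimately show ?thesis by auto
qed


definition gg :: "nat \<Rightarrow> real \<Rightarrow> nat \<Rightarrow> real" where
  "gg n p k = (if k = 0 then 0 else ln (real k / (real n * p)))"

definition YY :: "nat \<Rightarrow> real \<Rightarrow> nat \<Rightarrow> real" where
  "YY n p k = (real k - real n * p) / (real n * p)"

context
  fixes p :: real
  assumes p0: "0 < p" and p1: "p < 1"
begin

private lemma pI: "p \<in> {0..1}" using p0 p1 by auto

definition aa where "aa = 1 + \<bar>ln p\<bar> + 1/p"
definition dd :: "nat \<Rightarrow> real" where "dd n = 1 / sqrt (sqrt (real n))"
definition DD :: "nat \<Rightarrow> real" where "DD n = 3 * (real n * aa)^3"
definition bad :: "nat \<Rightarrow> nat set" where "bad n = {k. dd n * real n * p \<le> \<bar>real k - real n * p\<bar>}"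

lemma aa_ge: "aa \<ge> 1 + \<bar>ln p\<bar>" "aa \<ge> 1/p" "aa \<ge> 1"
  using p0 unfolding aa_def by auto

lemma gg_bound:
  assumes "k \<le> n" "n \<ge> 1"
  shows "\<bar>gg n p k\<bar> \<le> real n * aa"
proof (cases "k = 0")
  case True thus ?thesis using aa_ge by (simp add: gg_def)
next
  case False
  have k: "real k \<ge> 1" "real k \<le> real n" using False assms by auto
  have np: "real n * p > 0" using assms p0 by auto
  have "ln (real k / (real n * p)) = ln (real k) - ln (real n) - ln p"
    using k np p0 by (simp add: ln_div ln_mult)
  moreover have "ln (real k) \<le> ln (real n)" "ln (real k) \<ge> 0" using k by auto
  moreover have "ln (real n) \<le> real n" using ln_le_minus_one[of "real n"] k by linarith
  moreover have "real n * aa \<ge> real n * (1 + \<bar>ln p\<bar>)" using aa_ge(1) by (intro mult_left_mono) auto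
  moreover have "real n * \<bar>ln p\<bar> \<ge> 1 * \<bar>ln p\<bar>" using k by (intro mult_right_mono) auto
  hence "real n * (1 + \<bar>ln p\<bar>) \<ge> real n + \<bar>ln p\<bar>" by (simp add: algebra_simps)
  ultimately have "\<bar>ln (real k / (real n * p))\<bar> \<le> real n + \<bar>ln p\<bar>"
    by (simp only: abs_le_iff) linarith
  moreover have "real n * aa \<ge> real n + \<bar>ln p\<bar>"
    using \<open>real n * aa \<ge> real n * (1 + \<bar>ln p\<bar>)\<close> \<open>real n * (1 + \<bar>ln p\<bar>) \<ge> real n + \<bar>ln p\<bar>\<close> by linarith
  ultimately show ?thesis using False unfolding gg_def by auto
qed

lemma YY_bound:
  assumes "k \<le> n" "n \<ge> 1"
  shows "\<bar>YY n p k\<bar> \<le> real n * aa"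
proof -
  have np: "real n * p > 0" using assms p0 by auto
  have "real n * p \<le> real n" "0 \<le> real n * p" using p0 p1 by (auto intro: mult_left_le)
  moreover have "real k \<le> real n" using assms by simp
  ultimately have "\<bar>real k - real n * p\<bar> \<le> real n" by (simp only: abs_le_iff) linarith
  hence "\<bar>real k - real n * p\<bar> / (real n * p) \<le> real n / (real n * p)"
    using np by (intro divide_right_mono) auto
  hence "\<bar>YY n p k\<bar> \<le> real n / (real n * p)" unfolding YY_def using np
    by (simp add: abs_div)
  also have "\<dots> = 1/p" using assms by simp
  also have "\<dots> \<le> aa" by (rule aa_ge)
  also have "\<dots> \<le> real n * aa" using assms aa_ge by simp
  finally show ?thesis .
qed

lemma good_facts:
  assumes "k \<le> n" "n \<ge> 16" "k \<notin> bad n"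
  shows "\<bar>YY n p k\<bar> \<le> dd n" "dd n \<le> 1/2" "gg n p k = ln (1 + YY n p k)"
proof -
  have np: "real n * p > 0" using assms p0 by auto
  have lt: "\<bar>real k - real n * p\<bar> < dd n * real n * p" using assms unfolding bad_def by auto
  have "\<bar>YY n p k\<bar> = \<bar>real k - real n * p\<bar> / (real n * p)" unfolding YY_def using np by (simp add: abs_div)
  also have "\<dots> \<le> dd n" using lt np by (simp add: field_simps)
  finally show Y: "\<bar>YY n p k\<bar> \<le> dd n" .
  have "sqrt (sqrt (real n)) \<ge> sqrt (sqrt 16)" using assms by (intro real_sqrt_le_mono) auto
  moreover have "sqrt (sqrt (16::real)) = 2" by (simp add: real_sqrt_eq_iff)
  ultimately have "1 / sqrt (sqrt (real n)) \<le> 1 / 2" using assms by (intro divide_left_mono) auto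
  thus d: "dd n \<le> 1/2" unfolding dd_def by simp
  have "1 + YY n p k = real k / (real n * p)" unfolding YY_def using np p0 assms by (simp add: divide_simps)
  moreover have "k \<noteq> 0"
  proof
    assume "k = 0"
    hence "\<bar>YY n p k\<bar> = 1" unfolding YY_def using np p0 assms by simp
    with Y d show False by simp
  qed
  ultimately show "gg n p k = ln (1 + YY n p k)" unfolding gg_def by simp
qed

lemma pw_bounds:
  assumes "k \<le> n" "n \<ge> 16"
  shows "\<bar>gg n p k - YY n p k + (YY n p k)\<^sup>2/2\<bar> \<le> dd n * (YY n p k)\<^sup>2 + DD n * indicator (bad n) k"
    and "\<bar>(gg n p k)\<^sup>2 - (YY n p k)\<^sup>2\<bar> \<le> 6 * dd n * (YY n p k)\<^sup>2 + DD n * indicator (bad n) k"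
    and "\<bar>gg n p k\<bar>^3 \<le> 8 * dd n * (YY n p k)\<^sup>2 + DD n * indicator (bad n) k"
proof -
  let ?y = "YY n p k" and ?g = "gg n p k" and ?A = "real n * aa"
  have dpos: "dd n \<ge> 0" unfolding dd_def by simp
  have Dnn: "DD n \<ge> 0" unfolding DD_def using aa_ge by simp
  have "real n \<ge> 1" using assms by simp
  hence A1: "?A \<ge> 1" using aa_ge(3) by (metis mult_mono' mult_1 zero_le_one)
  have "\<bar>?g - ?y + ?y\<^sup>2/2\<bar> \<le> dd n * ?y\<^sup>2 + DD n * indicator (bad n) k \<and>
        \<bar>?g\<^sup>2 - ?y\<^sup>2\<bar> \<le> 6 * dd n * ?y\<^sup>2 + DD n * indicator (bad n) k \<and>
        \<bar>?g\<bar>^3 \<le> 8 * dd n * ?y\<^sup>2 + DD n * indicator (bad n) k"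
  proof (cases "k \<in> bad n")
    case True
    have gA: "\<bar>?g\<bar> \<le> ?A" and yA: "\<bar>?y\<bar> \<le> ?A" using gg_bound YY_bound assms by auto
    have "\<bar>?y\<bar>\<^sup>2 \<le> ?A\<^sup>2" using yA by (intro power_mono) auto
    hence "\<bar>?y\<^sup>2\<bar> \<le> ?A\<^sup>2" by simp
    have A2: "?A\<^sup>2 \<le> ?A^3" "?A \<le> ?A^3"
      using power_increasing[of 2 3 "?A"] power_increasing[of 1 3 "?A"] A1 by simp_all
    have "\<bar>?g - ?y + ?y\<^sup>2/2\<bar> \<le> \<bar>?g\<bar> + \<bar>?y\<bar> + ?y\<^sup>2/2" using zero_le_power2[of ?y] by linarith
    also have "\<dots> \<le> ?A + ?A + ?A\<^sup>2" using gA yA \<open>\<bar>?y\<^sup>2\<bar> \<le> ?A\<^sup>2\<close> zero_le_power2[of ?A] by linarith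
    also have "\<dots> \<le> DD n" unfolding DD_def using A2 A1 by linarith
    finally have 1: "\<bar>?g - ?y + ?y\<^sup>2/2\<bar> \<le> DD n" .
    have "\<bar>?g\<^sup>2 - ?y\<^sup>2\<bar> \<le> ?g\<^sup>2 + ?y\<^sup>2" by (simp add: abs_if)
    also have "\<dots> \<le> ?A\<^sup>2 + ?A\<^sup>2"
    proof -
      have "\<bar>?g\<bar>\<^sup>2 \<le> ?A\<^sup>2" "\<bar>?y\<bar>\<^sup>2 \<le> ?A\<^sup>2" using gA yA by (intro power_mono; simp)+
      thus ?thesis by simp
    qed
    also have "\<dots> \<le> DD n" unfolding DD_def using A2 A1 by linarith
    finally have 2: "\<bar>?g\<^sup>2 - ?y\<^sup>2\<bar> \<le> DD n" .
    have "\<bar>?g\<bar>^3 \<le> ?A^3" using gA by (intro power_mono) auto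
    also have "\<dots> \<le> DD n" unfolding DD_def using A2 A1 by linarith
    finally have 3: "\<bar>?g\<bar>^3 \<le> DD n" .
    have h: "0 \<le> dd n * ?y\<^sup>2" "0 \<le> 6 * dd n * ?y\<^sup>2" "0 \<le> 8 * dd n * ?y\<^sup>2" using dpos by simp_all
    have i: "indicator (bad n) k = (1::real)" using True by simp
    show ?thesis unfolding i mult_1_right using 1 2 3 h by (intro conjI; linarith)
  next
    case False
    note gf = good_facts[OF assms False]
    have y: "\<bar>?y\<bar> \<le> 1/2" using gf by simp
    have c3: "\<bar>?y\<bar>^3 \<le> dd n * ?y\<^sup>2"
    proof -
      have "\<bar>?y\<bar>^3 = \<bar>?y\<bar> * ?y\<^sup>2" by (simp add: power2_eq_square power3_eq_cube)
      also have "\<dots> \<le> dd n * ?y\<^sup>2" using gf(1) by (intro mult_right_mono) auto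
      finally show ?thesis .
    qed
    have 1: "\<bar>?g - ?y + ?y\<^sup>2/2\<bar> \<le> \<bar>?y\<bar>^3" unfolding gf(3) by (rule ln3[OF y])
    have gy: "\<bar>?g - ?y\<bar> \<le> 2 * ?y\<^sup>2" unfolding gf(3) by (rule abs_ln_one_plus_x_minus_x_bound[OF y])
    have "?y\<^sup>2 = \<bar>?y\<bar> * \<bar>?y\<bar>" by (simp add: power2_eq_square)
    also have "\<dots> \<le> \<bar>?y\<bar> * (1/2)" using y by (intro mult_left_mono) auto
    finally have y2: "?y\<^sup>2 \<le> \<bar>?y\<bar> / 2" by simp
    have gabs: "\<bar>?g\<bar> \<le> 2 * \<bar>?y\<bar>" using gy y2 by linarith
    have "\<bar>?g\<^sup>2 - ?y\<^sup>2\<bar> = \<bar>?g - ?y\<bar> * \<bar>?g + ?y\<bar>" by (simp add: power2_eq_square abs_mult[symmetric] algebra_simps)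
    also have "\<dots> \<le> (2 * ?y\<^sup>2) * (3 * \<bar>?y\<bar>)" using gy gabs by (intro mult_mono) auto
    also have "\<dots> = 6 * \<bar>?y\<bar>^3" by (simp add: power2_eq_square power3_eq_cube)
    finally have 2: "\<bar>?g\<^sup>2 - ?y\<^sup>2\<bar> \<le> 6 * \<bar>?y\<bar>^3" .
    have "\<bar>?g\<bar>^3 \<le> (2 * \<bar>?y\<bar>)^3" using gabs by (intro power_mono) auto
    hence 3: "\<bar>?g\<bar>^3 \<le> 8 * \<bar>?y\<bar>^3" by (simp add: power_mult_distrib)
    show ?thesis using 1 2 3 c3 False by auto
  qed
  thus "\<bar>?g - ?y + ?y\<^sup>2/2\<bar> \<le> dd n * ?y\<^sup>2 + DD n * indicator (bad n) k"
    and "\<bar>?g\<^sup>2 - ?y\<^sup>2\<bar> \<le> 6 * dd n * ?y\<^sup>2 + DD n * indicator (bad n) k"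
    and "\<bar>?g\<bar>^3 \<le> 8 * dd n * ?y\<^sup>2 + DD n * indicator (bad n) k" by auto
qed


lemma pIs[simp]: "p \<in> {0..1}" using p0 p1 by auto
lemma pIs'[simp]: "0 \<le> p" "p \<le> 1" using p0 p1 by auto

lemma EY: "n \<ge> 1 \<Longrightarrow> measure_pmf.expectation (binomial_pmf n p) (YY n p) = 0"
  unfolding YY_def using bin_c1[OF pIs] by simp

lemma EY2: "n \<ge> 1 \<Longrightarrow> measure_pmf.expectation (binomial_pmf n p) (\<lambda>k. (YY n p k)\<^sup>2) = (1-p) / (real n * p)"
proof -
  assume n: "n \<ge> 1"
  have "measure_pmf.expectation (binomial_pmf n p) (\<lambda>k. (YY n p k)\<^sup>2) =
      measure_pmf.expectation (binomial_pmf n p) (\<lambda>k. (real k - real n * p)\<^sup>2) / (real n * p)\<^sup>2"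
    unfolding YY_def power_divide by simp
  also have "\<dots> = (1-p) / (real n * p)" unfolding bin_c2[OF pIs] using n p0 by (simp add: power2_eq_square field_simps)
  finally show ?thesis .
qed

lemma Pbad: "n \<ge> 1 \<Longrightarrow> measure_pmf.prob (binomial_pmf n p) (bad n) \<le> 2 * exp (-2 * p\<^sup>2 * sqrt (real n))"
proof -
  assume n: "n \<ge> 1"
  interpret binomial_distribution n p by unfold_locales simp
  have e: "dd n * real n * p \<ge> 0" unfolding dd_def using p0 by simp
  have eq: "(dd n * real n * p)\<^sup>2 / real n = p\<^sup>2 * sqrt (real n)"
  proof -
    have s: "(sqrt (sqrt (real n)))\<^sup>2 = sqrt (real n)" by simp
    have s2: "(sqrt (real n))\<^sup>2 = real n" by simp
    show ?thesis unfolding dd_def power_mult_distrib power_divide s using n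
      by (simp add: field_simps) (metis s2 power2_eq_square)
  qed
  have "measure_pmf.prob (binomial_pmf n p) (bad n) \<le> 2 * exp (-2 * (dd n * real n * p)\<^sup>2 / real n)"
    using prob_abs_ge[OF _ e] n unfolding bad_def by simp
  also have "-2 * (dd n * real n * p)\<^sup>2 / real n = -2 * ((dd n * real n * p)\<^sup>2 / real n)" by simp
  also note eq
  finally show ?thesis by (simp add: mult.assoc)
qed

lemma E_bound:
  assumes n: "n \<ge> 1" and c: "c \<ge> 0"
    and b: "\<And>k. k \<le> n \<Longrightarrow> \<bar>F k\<bar> \<le> c * dd n * (YY n p k)\<^sup>2 + DD n * indicator (bad n) k"
  shows "\<bar>real n * measure_pmf.expectation (binomial_pmf n p) F\<bar> \<le>
           c * dd n * (1-p)/p + real n * DD n * (2 * exp (-2 * p\<^sup>2 * sqrt (real n)))"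
proof -
  let ?E = "measure_pmf.expectation (binomial_pmf n p)"
  have "\<bar>?E F\<bar> \<le> ?E (\<lambda>k. \<bar>F k\<bar>)" by (rule integral_abs_bound)
  also have "\<dots> \<le> ?E (\<lambda>k. c * dd n * (YY n p k)\<^sup>2 + DD n * indicator (bad n) k)"
    by (intro integral_mono_AE AE_pmfI) (use b p0 p1 in auto)
  also have "\<dots> = c * dd n * ?E (\<lambda>k. (YY n p k)\<^sup>2) + DD n * measure_pmf.prob (binomial_pmf n p) (bad n)"
    by (simp add: Bochner_Integration.integral_add)
  also have "\<dots> \<le> c * dd n * ((1-p) / (real n * p)) + DD n * (2 * exp (-2 * p\<^sup>2 * sqrt (real n)))"
  proof -
    have "0 \<le> c * dd n" using c by (simp add: dd_def)
    moreover have "0 \<le> real n * aa" using aa_ge(3) by simp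
    ultimately show ?thesis
      unfolding EY2[OF n] using Pbad[OF n] by (intro add_mono mult_left_mono) (auto simp: DD_def)
  qed
  finally have "\<bar>?E F\<bar> \<le> c * dd n * ((1-p) / (real n * p)) + DD n * (2 * exp (-2 * p\<^sup>2 * sqrt (real n)))" .
  hence "real n * \<bar>?E F\<bar> \<le> real n * (c * dd n * ((1-p) / (real n * p)) + DD n * (2 * exp (-2 * p\<^sup>2 * sqrt (real n))))"
    by (intro mult_left_mono) auto
  also have "\<dots> = c * dd n * (1-p)/p + real n * DD n * (2 * exp (-2 * p\<^sup>2 * sqrt (real n)))"
    using n p0 by (simp add: field_simps)
  finally show ?thesis by (simp add: abs_mult)
qed

definition err :: "nat \<Rightarrow> real" where
  "err n = 8 * dd n * (1-p)/p + real n * DD n * (2 * exp (-2 * p\<^sup>2 * sqrt (real n)))"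

lemma err_lim: "err \<longlonglongrightarrow> 0"
proof -
  have c: "2 * p\<^sup>2 > 0" using p0 by simp
  have l1: "(\<lambda>n::nat. real n ^ 4 * exp (- (2 * p\<^sup>2) * sqrt (real n))) \<longlonglongrightarrow> 0"
    using c by real_asymp
  have l2: "dd \<longlonglongrightarrow> 0" unfolding dd_def by real_asymp
  have eq: "err = (\<lambda>n. (8 * (1-p)/p) * dd n + (6 * aa^3) * (real n ^ 4 * exp (- (2 * p\<^sup>2) * sqrt (real n))))"
    unfolding err_def DD_def by (rule ext) (simp add: power_mult_distrib field_simps power3_eq_cube power4_eq_xxxx)
  have "(\<lambda>n. (8 * (1-p)/p) * dd n + (6 * aa^3) * (real n ^ 4 * exp (- (2 * p\<^sup>2) * sqrt (real n))))
     \<longlonglongrightarrow> (8 * (1-p)/p) * 0 + (6 * aa^3) * 0"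
    by (intro tendsto_add tendsto_mult tendsto_const l1 l2)
  thus ?thesis unfolding eq by simp
qed

lemma err_bound:
  assumes n: "n \<ge> 16" and c: "0 \<le> c" "c \<le> 8"
    and b: "\<And>k. k \<le> n \<Longrightarrow> \<bar>F k\<bar> \<le> c * dd n * (YY n p k)\<^sup>2 + DD n * indicator (bad n) k"
  shows "\<bar>real n * measure_pmf.expectation (binomial_pmf n p) F\<bar> \<le> err n"
proof -
  have "\<bar>real n * measure_pmf.expectation (binomial_pmf n p) F\<bar> \<le>
           c * dd n * (1-p)/p + real n * DD n * (2 * exp (-2 * p\<^sup>2 * sqrt (real n)))"
    using n c by (intro E_bound b) auto
  also have "c * dd n * (1-p)/p \<le> 8 * dd n * (1-p)/p"
    using c p0 p1 by (intro divide_right_mono mult_right_mono) (auto simp: dd_def)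
  finally show ?thesis unfolding err_def by simp
qed

lemma M1: "(\<lambda>n. real n * measure_pmf.expectation (binomial_pmf n p) (gg n p)) \<longlonglongrightarrow> -(1-p)/(2*p)"
proof -
  let ?E = "\<lambda>n. measure_pmf.expectation (binomial_pmf n p)"
  let ?F = "\<lambda>n k. gg n p k - YY n p k + (YY n p k)\<^sup>2/2"
  have ev: "\<forall>\<^sub>F n in sequentially. norm (real n * ?E n (gg n p) - (-(1-p)/(2*p))) \<le> err n"
    using eventually_ge_at_top[of 16]
  proof eventually_elim
    case (elim n)
    have n1: "n \<ge> 1" using elim by simp
    have "?E n (?F n) = ?E n (gg n p) - ?E n (YY n p) + ?E n (\<lambda>k. (YY n p k)\<^sup>2) / 2"
      by (simp add: Bochner_Integration.integral_add Bochner_Integration.integral_diff)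
    hence "real n * ?E n (gg n p) - (-(1-p)/(2*p)) = real n * ?E n (?F n)"
      unfolding EY[OF n1] EY2[OF n1] using n1 p0 by (simp add: field_simps)
    moreover have "\<bar>real n * ?E n (?F n)\<bar> \<le> err n"
      by (rule err_bound[where c=1]) (use elim pw_bounds(1) in auto)
    ultimately show ?case by simp
  qed
  have "(\<lambda>n. real n * ?E n (gg n p) - (-(1-p)/(2*p))) \<longlonglongrightarrow> 0"
    by (rule Lim_null_comparison[OF ev err_lim])
  thus ?thesis by (simp add: LIM_zero_iff)
qed

lemma M2: "(\<lambda>n. real n * measure_pmf.expectation (binomial_pmf n p) (\<lambda>k. (gg n p k)\<^sup>2)) \<longlonglongrightarrow> (1-p)/p"
proof -
  let ?E = "\<lambda>n. measure_pmf.expectation (binomial_pmf n p)"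
  let ?F = "\<lambda>n k. (gg n p k)\<^sup>2 - (YY n p k)\<^sup>2"
  have ev: "\<forall>\<^sub>F n in sequentially. norm (real n * ?E n (\<lambda>k. (gg n p k)\<^sup>2) - (1-p)/p) \<le> err n"
    using eventually_ge_at_top[of 16]
  proof eventually_elim
    case (elim n)
    have n1: "n \<ge> 1" using elim by simp
    have "?E n (?F n) = ?E n (\<lambda>k. (gg n p k)\<^sup>2) - ?E n (\<lambda>k. (YY n p k)\<^sup>2)"
      by (simp add: Bochner_Integration.integral_diff)
    hence "real n * ?E n (\<lambda>k. (gg n p k)\<^sup>2) - (1-p)/p = real n * ?E n (?F n)"
      unfolding EY2[OF n1] using n1 p0 by (simp add: field_simps)
    moreover have "\<bar>real n * ?E n (?F n)\<bar> \<le> err n"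
      by (rule err_bound[where c=6]) (use elim pw_bounds(2) in auto)
    ultimately show ?case by simp
  qed
  have "(\<lambda>n. real n * ?E n (\<lambda>k. (gg n p k)\<^sup>2) - (1-p)/p) \<longlonglongrightarrow> 0"
    by (rule Lim_null_comparison[OF ev err_lim])
  thus ?thesis by (simp add: LIM_zero_iff)
qed

lemma M3: "(\<lambda>n. real n * measure_pmf.expectation (binomial_pmf n p) (\<lambda>k. \<bar>gg n p k\<bar>^3)) \<longlonglongrightarrow> 0"
proof -
  let ?E = "\<lambda>n. measure_pmf.expectation (binomial_pmf n p)"
  have ev: "\<forall>\<^sub>F n in sequentially. norm (real n * ?E n (\<lambda>k. \<bar>gg n p k\<bar>^3)) \<le> err n"
    using eventually_ge_at_top[of 16]
  proof eventually_elim
    case (elim n)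
    have "\<bar>real n * ?E n (\<lambda>k. \<bar>gg n p k\<bar>^3)\<bar> \<le> err n"
      by (rule err_bound[where c=8]) (use elim pw_bounds(3) in auto)
    thus ?case by simp
  qed
  show ?thesis by (rule Lim_null_comparison[OF ev err_lim])
qed

end


lemma row_law:
  assumes i: "i < n" and p: "p \<in> {0..1}"
  shows "map_pmf (\<lambda>\<xi>. card ({..<n} \<inter> {j. \<xi> (i,j)})) (bernoulli_array n p) = binomial_pmf n p"
proof -
  let ?I = "{..<n} \<times> {..<n}" and ?A = "{i} \<times> {..<n}"
  have cardA: "card ?A = n" by (simp add: card_cartesian_product)
  have sub: "?A \<subseteq> ?I" using i by auto
  have "binomial_pmf n p = map_pmf (\<lambda>f. card {x\<in>?A. f x}) (Pi_pmf ?A False (\<lambda>_. bernoulli_pmf p))"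
    by (rule binomial_pmf_altdef'[OF _ cardA p]) simp
  also have "Pi_pmf ?A False (\<lambda>_. bernoulli_pmf p) =
     map_pmf (\<lambda>f x. if x \<in> ?A then f x else False) (Pi_pmf ?I False (\<lambda>_. bernoulli_pmf p))"
    by (rule Pi_pmf_subset[OF _ sub]) simp
  also have "map_pmf (\<lambda>f. card {x\<in>?A. f x}) \<dots> =
      map_pmf (\<lambda>\<xi>. card ({..<n} \<inter> {j. \<xi> (i,j)})) (Pi_pmf ?I False (\<lambda>_. bernoulli_pmf p))"
    unfolding map_pmf_comp
  proof (intro map_pmf_cong refl)
    fix f :: "nat \<times> nat \<Rightarrow> bool"
    have "{x\<in>?A. if x \<in> ?A then f x else False} = (\<lambda>j. (i,j)) ` ({..<n} \<inter> {j. f (i,j)})"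
      by auto
    moreover have "inj_on (\<lambda>j. (i,j)) ({..<n} \<inter> {j. f (i,j)})" by (auto simp: inj_on_def)
    ultimately show "card {x\<in>?A. if x \<in> ?A then f x else False} = card ({..<n} \<inter> {j. f (i,j)})"
      by (simp add: card_image)
  qed
  finally show ?thesis unfolding bernoulli_array_def ..
qed

lemma indep_rows:
  fixes h :: "real \<Rightarrow> real"
  assumes h[measurable]: "h \<in> borel_measurable borel"
  shows "prob_space.indep_vars (measure_pmf (bernoulli_array n p)) (\<lambda>_. borel)
           (\<lambda>i \<xi>. h (\<Sum>j<n. of_bool (\<xi> (i,j)))) {..<n}"
proof -
  let ?I = "{..<n} \<times> {..<n}" and ?K = "\<lambda>i. {i} \<times> {..<n}"
  let ?M = "measure_pmf (bernoulli_array n p)"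
  have ind0: "prob_space.indep_vars (measure_pmf (bernoulli_array n p)) (\<lambda>_. count_space UNIV) (\<lambda>x f. f x) ?I"
    unfolding bernoulli_array_def by (rule indep_vars_Pi_pmf) simp
  have ind1: "prob_space.indep_vars (measure_pmf (bernoulli_array n p)) (\<lambda>i. PiM (?K i) (\<lambda>_. count_space UNIV)) (\<lambda>i \<omega>. restrict (\<lambda>x. \<omega> x) (?K i)) {..<n}"
    by (rule prob_space.indep_vars_restrict[OF prob_space_measure_pmf ind0]) (auto simp: disjoint_family_on_def)
  define Y where "Y i F = h (\<Sum>j<n. of_bool (F (i,j)))" for i and F :: "nat \<times> nat \<Rightarrow> bool"
  have Ym: "Y i \<in> borel_measurable (PiM (?K i) (\<lambda>_. count_space UNIV))" if "i \<in> {..<n}" for i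
  proof -
    have c: "(\<lambda>F. F (i,j)) \<in> measurable (PiM (?K i) (\<lambda>_. count_space UNIV)) (count_space UNIV)" if "j < n" for j
      by (rule measurable_component_singleton) (use that in simp)
    have "(\<lambda>F. \<Sum>j<n. of_bool (F (i,j)) :: real) \<in> borel_measurable (PiM (?K i) (\<lambda>_. count_space UNIV))"
    proof (intro borel_measurable_sum)
      fix j assume "j \<in> {..<n}"
      hence "j < n" by simp
      show "(\<lambda>F. of_bool (F (i,j)) :: real) \<in> borel_measurable (PiM (?K i) (\<lambda>_. count_space UNIV))"
        by (rule measurable_compose[OF c[OF \<open>j < n\<close>]]) simp
    qed
    thus ?thesis unfolding Y_def by (rule measurable_compose) (rule h)
  qed
  have ind2: "prob_space.indep_vars (measure_pmf (bernoulli_array n p)) (\<lambda>_. borel) (\<lambda>i \<omega>. Y i (restrict (\<lambda>x. \<omega> x) (?K i))) {..<n}"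
    by (rule prob_space.indep_vars_compose2[OF prob_space_measure_pmf ind1 Ym])
  show ?thesis
    by (rule iffD1[OF prob_space.indep_vars_cong[OF prob_space_measure_pmf] ind2]) (auto simp: Y_def fun_eq_iff)
qed


definition mu0 :: "real \<Rightarrow> real" where "mu0 p = -(1-p)/(2*p)"
definition sg :: "real \<Rightarrow> real" where "sg p = sqrt ((1-p)/p)"
definition xr :: "nat \<Rightarrow> real \<Rightarrow> real \<Rightarrow> real" where
  "xr n p s = ((if s = 0 then 0 else ln (s / (real n * p))) - mu0 p / real n) / sg p"
definition Wn :: "nat \<Rightarrow> real \<Rightarrow> (nat \<times> nat \<Rightarrow> bool) \<Rightarrow> real" where
  "Wn n p \<xi> = (\<Sum>i<n. xr n p (\<Sum>j<n. of_bool (\<xi> (i,j))))"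
definition law :: "nat \<Rightarrow> real \<Rightarrow> real measure" where
  "law n p = distr (measure_pmf (bernoulli_array n p)) borel (Wn n p)"

lemma xr_meas[measurable]: "xr n p \<in> borel_measurable borel"
  unfolding xr_def by measurable

lemma real_distribution_law: "real_distribution (law n p)"
  unfolding law_def by (intro prob_space.real_distribution_distr prob_space_measure_pmf) simp

lemma char_law:
  assumes p: "p \<in> {0..1}"
  shows "char (law n p) t = (measure_pmf.expectation (binomial_pmf n p) (\<lambda>k. iexp (t * xr n p (real k))))^n"
proof -
  let ?M = "measure_pmf (bernoulli_array n p)"
  let ?X = "\<lambda>i \<xi>. xr n p (\<Sum>j<n. of_bool (\<xi> (i,j)))"
  have ind: "prob_space.indep_vars ?M (\<lambda>_. borel) ?X {..<n}"
    by (rule indep_rows) simp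
  have "char (law n p) t = (\<Prod>i<n. char (distr ?M borel (?X i)) t)"
    unfolding law_def Wn_def by (rule prob_space.char_distr_sum[OF prob_space_measure_pmf ind])
  also have "\<dots> = (\<Prod>i<n. measure_pmf.expectation (binomial_pmf n p) (\<lambda>k. iexp (t * xr n p (real k))))"
  proof (intro prod.cong refl)
    fix i assume i: "i \<in> {..<n}"
    have "char (distr ?M borel (?X i)) t = measure_pmf.expectation (bernoulli_array n p) (\<lambda>\<xi>. iexp (t * ?X i \<xi>))"
      unfolding char_def by (subst integral_distr) auto
    also have "\<dots> = measure_pmf.expectation (bernoulli_array n p)
        (\<lambda>\<xi>. (\<lambda>k. iexp (t * xr n p (real k))) (card ({..<n} \<inter> {j. \<xi> (i,j)})))"
      by simp
    also have "\<dots> = measure_pmf.expectation (map_pmf (\<lambda>\<xi>. card ({..<n} \<inter> {j. \<xi> (i,j)})) (bernoulli_array n p))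
        (\<lambda>k. iexp (t * xr n p (real k)))"
      by simp
    also have "\<dots> = measure_pmf.expectation (binomial_pmf n p) (\<lambda>k. iexp (t * xr n p (real k)))"
      using i p by (subst row_law) auto
    finally show "char (distr ?M borel (?X i)) t = measure_pmf.expectation (binomial_pmf n p) (\<lambda>k. iexp (t * xr n p (real k)))" .
  qed
  also have "\<dots> = (measure_pmf.expectation (binomial_pmf n p) (\<lambda>k. iexp (t * xr n p (real k))))^n"
    by simp
  finally show ?thesis .
qed


lemma cube_sum_le: "(\<bar>a\<bar> + \<bar>b\<bar>)^3 \<le> 4 * (\<bar>a\<bar>^3 + \<bar>b\<bar>^3)" for a b :: real
proof -
  let ?x = "\<bar>a\<bar>" and ?y = "\<bar>b\<bar>"
  have "4 * (?x^3 + ?y^3) - (?x + ?y)^3 = 3 * (?x + ?y) * (?x - ?y)\<^sup>2"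
    by (simp add: power2_eq_square power3_eq_cube algebra_simps)
  also have "\<dots> \<ge> 0" by simp
  finally show ?thesis by simp
qed

lemma tr_ev:
  assumes "(f \<longlongrightarrow> l) sequentially" "\<And>n. n \<ge> N \<Longrightarrow> g n = f n"
  shows "(g \<longlongrightarrow> l) sequentially"
proof (rule Lim_transform_eventually[OF assms(1)])
  show "\<forall>\<^sub>F n in sequentially. f n = g n"
    using eventually_ge_at_top[of N] by eventually_elim (simp add: assms(2))
qed

context
  fixes p :: real
  assumes p0: "0 < p" and p1: "p < 1"
begin

private lemma pp_P6[simp]: "p \<in> {0..1}" "0 \<le> p" "p \<le> 1" using p0 p1 by auto

lemma sg_pos: "sg p > 0" unfolding sg_def using p0 p1 by simp
lemma sg_sq: "(sg p)\<^sup>2 = (1-p)/p" unfolding sg_def using p0 p1 by simp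

lemma xr_gg: "xr n p (real k) = (gg n p k - mu0 p / real n) / sg p"
  unfolding xr_def gg_def by simp

abbreviation "EE n f \<equiv> measure_pmf.expectation (binomial_pmf n p) f"

lemma na_lim: "(\<lambda>n. real n * EE n (\<lambda>k. xr n p (real k))) \<longlonglongrightarrow> 0"
proof -
  have eq: "real n * EE n (\<lambda>k. xr n p (real k)) = (real n * EE n (gg n p) - mu0 p) / sg p" if "n \<ge> 1" for n
  proof -
    have "EE n (\<lambda>k. xr n p (real k)) = (EE n (gg n p) - mu0 p / real n) / sg p"
      unfolding xr_gg by (simp add: Bochner_Integration.integral_diff measure_pmf.prob_space)
    thus ?thesis using that sg_pos by (simp add: field_simps)
  qed
  have "(\<lambda>n. (real n * EE n (gg n p) - mu0 p) / sg p) \<longlonglongrightarrow> (mu0 p - mu0 p) / sg p"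
    by (intro tendsto_intros M1[OF p0 p1, folded mu0_def]) (use sg_pos in simp)
  hence "(\<lambda>n. (real n * EE n (gg n p) - mu0 p) / sg p) \<longlonglongrightarrow> 0" by simp
  thus ?thesis by (rule tr_ev[where N=1]) (rule eq)
qed

lemma Eg_lim: "(\<lambda>n. EE n (gg n p)) \<longlonglongrightarrow> 0"
proof -
  have "(\<lambda>n. (real n * EE n (gg n p)) * (1 / real n)) \<longlonglongrightarrow> mu0 p * 0"
    by (intro tendsto_mult M1[OF p0 p1, folded mu0_def] lim_1_over_n)
  hence l: "(\<lambda>n. (real n * EE n (gg n p)) * (1 / real n)) \<longlonglongrightarrow> 0" by simp
  have ev: "\<forall>\<^sub>F n in sequentially. (real n * EE n (gg n p)) * (1 / real n) = EE n (gg n p)"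
    using eventually_ge_at_top[of 1] by eventually_elim simp
  show ?thesis by (rule Lim_transform_eventually[OF l ev])
qed

lemma nb_lim: "(\<lambda>n. real n * EE n (\<lambda>k. (xr n p (real k))\<^sup>2)) \<longlonglongrightarrow> 1"
proof -
  let ?m = "mu0 p"
  have eq: "real n * EE n (\<lambda>k. (xr n p (real k))\<^sup>2) =
     (real n * EE n (\<lambda>k. (gg n p k)\<^sup>2) - 2 * ?m * EE n (gg n p) + ?m\<^sup>2 * (1 / real n)) / (sg p)\<^sup>2"
    if "n \<ge> 1" for n
  proof -
    have "(\<lambda>k. (xr n p (real k))\<^sup>2) = (\<lambda>k. ((gg n p k)\<^sup>2 - (2 * ?m / real n) * gg n p k + (?m / real n)\<^sup>2) / (sg p)\<^sup>2)"
      unfolding xr_gg by (rule ext) (simp add: power_divide power2_eq_square algebra_simps)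
    hence "EE n (\<lambda>k. (xr n p (real k))\<^sup>2) =
        (EE n (\<lambda>k. (gg n p k)\<^sup>2) - (2 * ?m / real n) * EE n (gg n p) + (?m / real n)\<^sup>2) / (sg p)\<^sup>2"
      by (simp add: Bochner_Integration.integral_diff Bochner_Integration.integral_add measure_pmf.prob_space)
    thus ?thesis using that sg_pos by (simp add: field_simps power2_eq_square)
  qed
  have "(\<lambda>n. (real n * EE n (\<lambda>k. (gg n p k)\<^sup>2) - 2 * ?m * EE n (gg n p) + ?m\<^sup>2 * (1 / real n)) / (sg p)\<^sup>2)
      \<longlonglongrightarrow> ((1-p)/p - 2 * ?m * 0 + ?m\<^sup>2 * 0) / (sg p)\<^sup>2"
    by (intro tendsto_intros M2[OF p0 p1] Eg_lim lim_1_over_n) (use sg_pos in simp)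
  hence "(\<lambda>n. (real n * EE n (\<lambda>k. (gg n p k)\<^sup>2) - 2 * ?m * EE n (gg n p) + ?m\<^sup>2 * (1 / real n)) / (sg p)\<^sup>2)
      \<longlonglongrightarrow> 1" using sg_sq p0 p1 by simp
  thus ?thesis by (rule tr_ev[where N=1]) (rule eq)
qed

lemma nc_lim: "(\<lambda>n. real n * EE n (\<lambda>k. \<bar>xr n p (real k)\<bar>^3)) \<longlonglongrightarrow> 0"
proof -
  let ?m = "mu0 p"
  define B where "B n = 4 * (real n * EE n (\<lambda>k. \<bar>gg n p k\<bar>^3) + real n * (\<bar>?m\<bar>^3 / real n ^ 3)) / (sg p)^3" for n
  have bnd: "norm (real n * EE n (\<lambda>k. \<bar>xr n p (real k)\<bar>^3)) \<le> B n" for n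
  proof -
    have pw: "\<bar>xr n p (real k)\<bar>^3 \<le> 4 * (\<bar>gg n p k\<bar>^3 + \<bar>?m\<bar>^3 / real n ^ 3) / (sg p)^3" for k
    proof -
      have "\<bar>xr n p (real k)\<bar>^3 = \<bar>gg n p k - ?m / real n\<bar>^3 / (sg p)^3"
        unfolding xr_gg using sg_pos by (simp add: abs_div power_divide)
      also have "\<bar>gg n p k - ?m / real n\<bar>^3 \<le> (\<bar>gg n p k\<bar> + \<bar>?m / real n\<bar>)^3"
        by (intro power_mono abs_triangle_ineq4) simp
      also have "\<dots> \<le> 4 * (\<bar>gg n p k\<bar>^3 + \<bar>?m / real n\<bar>^3)" by (rule cube_sum_le)
      also have "\<bar>?m / real n\<bar>^3 = \<bar>?m\<bar>^3 / real n ^ 3" by (simp add: power_divide)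
      finally show ?thesis using sg_pos by (simp add: divide_right_mono)
    qed
    have nn: "0 \<le> EE n (\<lambda>k. \<bar>xr n p (real k)\<bar>^3)" by (intro integral_nonneg_AE) auto
    have "EE n (\<lambda>k. \<bar>xr n p (real k)\<bar>^3) \<le> EE n (\<lambda>k. 4 * (\<bar>gg n p k\<bar>^3 + \<bar>?m\<bar>^3 / real n ^ 3) / (sg p)^3)"
      by (intro integral_mono_AE AE_pmfI pw) auto
    also have "\<dots> = 4 * (EE n (\<lambda>k. \<bar>gg n p k\<bar>^3) + \<bar>?m\<bar>^3 / real n ^ 3) / (sg p)^3"
      by (simp add: Bochner_Integration.integral_add measure_pmf.prob_space)
    finally have "real n * EE n (\<lambda>k. \<bar>xr n p (real k)\<bar>^3) \<le> real n * (4 * (EE n (\<lambda>k. \<bar>gg n p k\<bar>^3) + \<bar>?m\<bar>^3 / real n ^ 3) / (sg p)^3)"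
      by (intro mult_left_mono) auto
    also have "\<dots> = B n" unfolding B_def by (simp add: algebra_simps)
    finally show ?thesis using nn by simp
  qed
  have l: "(\<lambda>n. real n * (\<bar>?m\<bar>^3 / real n ^ 3)) \<longlonglongrightarrow> 0" by real_asymp
  have "B \<longlonglongrightarrow> 4 * (0 + 0) / (sg p)^3" unfolding B_def
    by (intro tendsto_intros M3[OF p0 p1] l) (use sg_pos in simp)
  hence "B \<longlonglongrightarrow> 0" by simp
  moreover have "\<forall>\<^sub>F n in sequentially. norm (real n * EE n (\<lambda>k. \<bar>xr n p (real k)\<bar>^3)) \<le> B n"
    using bnd by (intro always_eventually allI)
  ultimately show ?thesis by (rule Lim_null_comparison[rotated])
qed

end


lemma iexp2: "cmod (iexp y - (complex_of_real (1 - y\<^sup>2/2) + \<i> * complex_of_real y)) \<le> \<bar>y\<bar>^3 / 6"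
proof -
  have "(\<Sum>k\<le>2. (\<i> * complex_of_real y)^k / fact k) = complex_of_real (1 - y\<^sup>2/2) + \<i> * complex_of_real y"
    by (simp add: numeral_2_eq_2 power2_eq_square complex_eq_iff)
  moreover have "fact (Suc 2) = (6::real)" by (simp add: numeral_3_eq_3)
  ultimately show ?thesis using iexp_approx1[of y 2] by (simp add: numeral_3_eq_3)
qed

context
  fixes p :: real
  assumes p0: "0 < p" and p1: "p < 1"
begin

private lemma pp_P7[simp]: "p \<in> {0..1}" "0 \<le> p" "p \<le> 1" using p0 p1 by auto

definition psi :: "nat \<Rightarrow> real \<Rightarrow> complex" where
  "psi n t = measure_pmf.expectation (binomial_pmf n p) (\<lambda>k. iexp (t * xr n p (real k)))"

lemma psi_approx:
  "cmod (psi n t - (complex_of_real (1 - t\<^sup>2 * EE p n (\<lambda>k. (xr n p (real k))\<^sup>2) / 2) +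
      \<i> * complex_of_real (t * EE p n (\<lambda>k. xr n p (real k)))))
   \<le> \<bar>t\<bar>^3 * EE p n (\<lambda>k. \<bar>xr n p (real k)\<bar>^3) / 6"
proof -
  let ?x = "\<lambda>k. xr n p (real k)"
  let ?ap = "\<lambda>k. complex_of_real (1 - (t * ?x k)\<^sup>2/2) + \<i> * complex_of_real (t * ?x k)"
  have Eap: "measure_pmf.expectation (binomial_pmf n p) ?ap =
      complex_of_real (1 - t\<^sup>2 * EE p n (\<lambda>k. (?x k)\<^sup>2) / 2) + \<i> * complex_of_real (t * EE p n ?x)"
  proof -
    have "measure_pmf.expectation (binomial_pmf n p) ?ap =
        measure_pmf.expectation (binomial_pmf n p) (\<lambda>k. complex_of_real (1 - (t * ?x k)\<^sup>2/2)) +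
        measure_pmf.expectation (binomial_pmf n p) (\<lambda>k. \<i> * complex_of_real (t * ?x k))"
      by (rule Bochner_Integration.integral_add) auto
    also have "\<dots> = complex_of_real (EE p n (\<lambda>k. 1 - (t * ?x k)\<^sup>2/2)) + \<i> * complex_of_real (EE p n (\<lambda>k. t * ?x k))"
      by (simp only: integral_complex_of_real integral_mult_right_zero)
    also have "EE p n (\<lambda>k. 1 - (t * ?x k)\<^sup>2/2) = 1 - t\<^sup>2 * EE p n (\<lambda>k. (?x k)\<^sup>2) / 2"
      by (simp add: Bochner_Integration.integral_diff measure_pmf.prob_space power_mult_distrib)
    also have "EE p n (\<lambda>k. t * ?x k) = t * EE p n ?x" by simp
    finally show ?thesis .
  qed
  have eq: "psi n t - (complex_of_real (1 - t\<^sup>2 * EE p n (\<lambda>k. (?x k)\<^sup>2) / 2) + \<i> * complex_of_real (t * EE p n ?x))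
      = measure_pmf.expectation (binomial_pmf n p) (\<lambda>k. iexp (t * ?x k) - ?ap k)"
    unfolding psi_def Eap[symmetric] by (simp add: Bochner_Integration.integral_diff)
  have "cmod (measure_pmf.expectation (binomial_pmf n p) (\<lambda>k. iexp (t * ?x k) - ?ap k))
      \<le> measure_pmf.expectation (binomial_pmf n p) (\<lambda>k. cmod (iexp (t * ?x k) - ?ap k))"
    by (rule integral_norm_bound)
  also have "\<dots> \<le> measure_pmf.expectation (binomial_pmf n p) (\<lambda>k. \<bar>t\<bar>^3 * \<bar>?x k\<bar>^3 / 6)"
  proof (intro integral_mono_AE AE_pmfI)
    fix k
    show "cmod (iexp (t * ?x k) - ?ap k) \<le> \<bar>t\<bar>^3 * \<bar>?x k\<bar>^3 / 6"
      using iexp2[of "t * ?x k"] by (simp add: abs_mult power_mult_distrib)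
  qed auto
  also have "\<dots> = \<bar>t\<bar>^3 * EE p n (\<lambda>k. \<bar>?x k\<bar>^3) / 6" by simp
  finally show ?thesis unfolding eq .
qed

lemma psi_le1: "cmod (psi n t) \<le> 1"
proof -
  have "cmod (psi n t) \<le> measure_pmf.expectation (binomial_pmf n p) (\<lambda>k. cmod (iexp (t * xr n p (real k))))"
    unfolding psi_def by (rule integral_norm_bound)
  also have "\<dots> = 1" by (simp add: norm_exp_i_times measure_pmf.prob_space)
  finally show ?thesis .
qed

lemma psi_pow_lim: "(\<lambda>n. psi n t ^ n) \<longlonglongrightarrow> complex_of_real (exp (- t\<^sup>2 / 2))"
proof -
  define a where "a n = EE p n (\<lambda>k. xr n p (real k))" for n
  define b where "b n = EE p n (\<lambda>k. (xr n p (real k))\<^sup>2)" for n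
  define c where "c n = EE p n (\<lambda>k. \<bar>xr n p (real k)\<bar>^3)" for n
  define e where "e n = exp (- t\<^sup>2 / (2 * real n))" for n
  define R where "R n = \<bar>t\<bar>^3 * (real n * c n) / 6 + \<bar>real n * (1 - e n - t\<^sup>2 / (2 * real n))\<bar>
     + t\<^sup>2 / 2 * \<bar>1 - real n * b n\<bar> + \<bar>t\<bar> * \<bar>real n * a n\<bar>" for n
  have bnd: "norm (psi n t ^ n - complex_of_real (exp (- t\<^sup>2 / 2))) \<le> R n" if n: "n \<ge> 1" for n
  proof -
    let ?A = "complex_of_real (1 - t\<^sup>2 * b n / 2) + \<i> * complex_of_real (t * a n)"
    let ?w = "complex_of_real (e n)"
    have w1: "norm ?w \<le> 1" unfolding e_def by simp
    have wn: "?w ^ n = complex_of_real (exp (- t\<^sup>2 / 2))"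
    proof -
      have "e n ^ n = exp (real n * (- t\<^sup>2 / (2 * real n)))" unfolding e_def by (simp only: exp_of_nat_mult)
      also have "real n * (- t\<^sup>2 / (2 * real n)) = - t\<^sup>2 / 2" using n by (simp add: field_simps)
      finally show ?thesis by (simp flip: of_real_power)
    qed
    have "norm (psi n t ^ n - ?w ^ n) \<le> real n * norm (psi n t - ?w)"
      by (rule norm_power_diff[OF psi_le1 w1])
    also have "norm (psi n t - ?w) \<le> norm (psi n t - ?A) + norm (?A - ?w)"
      by (rule norm_diff_triangle_le) auto
    also have "norm (psi n t - ?A) \<le> \<bar>t\<bar>^3 * c n / 6"
      using psi_approx[of n t] unfolding a_def b_def c_def by simp
    also have "norm (?A - ?w) \<le> \<bar>1 - t\<^sup>2 * b n / 2 - e n\<bar> + \<bar>t * a n\<bar>"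
    proof -
      have "?A - ?w = complex_of_real (1 - t\<^sup>2 * b n / 2 - e n) + \<i> * complex_of_real (t * a n)"
        by (simp add: complex_eq_iff)
      also have "norm \<dots> \<le> norm (complex_of_real (1 - t\<^sup>2 * b n / 2 - e n)) + norm (\<i> * complex_of_real (t * a n))"
        by (rule norm_triangle_ineq)
      also have "norm (complex_of_real (1 - t\<^sup>2 * b n / 2 - e n)) + norm (\<i> * complex_of_real (t * a n))
          = \<bar>1 - t\<^sup>2 * b n / 2 - e n\<bar> + \<bar>t * a n\<bar>"
        by (simp only: norm_mult norm_of_real norm_ii mult_1)
      finally show ?thesis .
    qed
    finally have "norm (psi n t ^ n - ?w ^ n) \<le> real n * (\<bar>t\<bar>^3 * c n / 6 + (\<bar>1 - t\<^sup>2 * b n / 2 - e n\<bar> + \<bar>t * a n\<bar>))"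
      by (simp add: mult_left_mono)
    also have "\<dots> \<le> R n"
    proof -
      have "real n * (1 - t\<^sup>2 * b n / 2 - e n) = real n * (1 - e n - t\<^sup>2 / (2 * real n)) + t\<^sup>2 / 2 * (1 - real n * b n)"
        using n by (simp add: field_simps)
      hence "\<bar>real n * (1 - t\<^sup>2 * b n / 2 - e n)\<bar> \<le> \<bar>real n * (1 - e n - t\<^sup>2 / (2 * real n))\<bar> + \<bar>t\<^sup>2 / 2 * (1 - real n * b n)\<bar>"
        by (simp only: abs_triangle_ineq)
      hence "real n * \<bar>1 - t\<^sup>2 * b n / 2 - e n\<bar> \<le> \<bar>real n * (1 - e n - t\<^sup>2 / (2 * real n))\<bar> + t\<^sup>2 / 2 * \<bar>1 - real n * b n\<bar>"
        by (simp add: abs_mult)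
      moreover have "real n * \<bar>t * a n\<bar> = \<bar>t\<bar> * \<bar>real n * a n\<bar>" by (simp add: abs_mult)
      moreover have "real n * (\<bar>t\<bar>^3 * c n / 6) = \<bar>t\<bar>^3 * (real n * c n) / 6" by simp
      ultimately show ?thesis unfolding R_def distrib_left by linarith
    qed
    finally show ?thesis unfolding wn .
  qed
  have l1: "(\<lambda>n. real n * (1 - e n - t\<^sup>2 / (2 * real n))) \<longlonglongrightarrow> 0"
    unfolding e_def by real_asymp
  have "R \<longlonglongrightarrow> \<bar>t\<bar>^3 * 0 / 6 + \<bar>0\<bar> + t\<^sup>2 / 2 * \<bar>1 - 1\<bar> + \<bar>t\<bar> * \<bar>0\<bar>"
    unfolding R_def a_def b_def c_def
    by (intro tendsto_intros l1 nc_lim[OF p0 p1] nb_lim[OF p0 p1] na_lim[OF p0 p1]) auto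
  hence "R \<longlonglongrightarrow> 0" by simp
  moreover have "\<forall>\<^sub>F n in sequentially. norm (psi n t ^ n - complex_of_real (exp (- t\<^sup>2 / 2))) \<le> R n"
    using eventually_ge_at_top[of 1] by eventually_elim (rule bnd)
  ultimately have "(\<lambda>n. psi n t ^ n - complex_of_real (exp (- t\<^sup>2 / 2))) \<longlonglongrightarrow> 0"
    by (rule Lim_null_comparison[rotated])
  thus ?thesis by (simp add: LIM_zero_iff)
qed

lemma char_law_conv: "(\<lambda>n. char (law n p) t) \<longlonglongrightarrow> char std_normal_distribution t"
  using psi_pow_lim[of t] unfolding char_std_normal_distribution char_law[OF pp_P7(1)] psi_def
  by simp

end


lemma std_cdf_cont: "isCont (cdf std_normal_distribution) y"
proof -
  interpret real_distribution std_normal_distribution by (rule real_dist_normal_dist)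
  have "{y} \<in> null_sets std_normal_distribution"
  proof (subst null_sets_density_iff)
    have "AE x in lborel. x \<in> {y} \<longrightarrow> ennreal (std_normal_density x) = 0"
      using AE_lborel_singleton[of y] by eventually_elim auto
    thus "{y} \<in> sets lborel \<and> (AE x in lborel. x \<in> {y} \<longrightarrow> ennreal (std_normal_density x) = 0)" by simp
  qed simp
  hence "measure std_normal_distribution {y} = 0" by (simp add: measure_eq_0_null_sets)
  thus ?thesis using finite_borel_measure.isCont_cdf[OF finite_borel_measure_M] by simp
qed

lemma normal_cdf_conv:
  fixes m s z :: real
  assumes s: "s > 0"
  shows "measure (density lborel (normal_density m s)) {..z} = measure std_normal_distribution {..(z - m)/s}"
proof -
  have "emeasure (density lborel (normal_density m s)) {..z} = (\<integral>\<^sup>+x. ennreal (normal_density m s x) * indicator {..z} x \<partial>lborel)"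
    by (rule emeasure_density) auto
  also have "\<dots> = \<bar>s\<bar> * (\<integral>\<^sup>+x. ennreal (normal_density m s (m + s * x)) * indicator {..z} (m + s * x) \<partial>lborel)"
    by (rule nn_integral_real_affine) (use s in auto)
  also have "\<dots> = (\<integral>\<^sup>+x. ennreal (s * normal_density m s (m + s * x)) * indicator {..(z - m)/s} x \<partial>lborel)"
  proof -
    have "ennreal \<bar>s\<bar> * (ennreal (normal_density m s (m + s * x)) * indicator {..z} (m + s * x)) =
          ennreal (s * normal_density m s (m + s * x)) * indicator {..(z - m)/s} x" for x
      using s by (auto simp: indicator_def ennreal_mult' field_simps mult.commute)
    thus ?thesis by (subst nn_integral_cmult[symmetric]) auto
  qed
  also have "\<dots> = (\<integral>\<^sup>+x. ennreal (std_normal_density x) * indicator {..(z - m)/s} x \<partial>lborel)"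
  proof -
    have "s * normal_density m s (m + s * x) = std_normal_density x" for x
      using s by (simp add: normal_density_def real_sqrt_mult power_mult_distrib field_simps)
    thus ?thesis by simp
  qed
  also have "\<dots> = emeasure std_normal_distribution {..(z - m)/s}"
    by (rule emeasure_density[symmetric]) auto
  finally show ?thesis by (simp add: measure_def)
qed


lemma pmf_diff_bound:
  fixes M :: "'a pmf"
  assumes "A - Z = B - Z"
  shows "\<bar>measure M A - measure M B\<bar> \<le> measure M Z"
proof -
  have ab: "measure M X \<le> measure M Y + measure M Z" if "X - Z = Y - Z" for X Y
  proof -
    have "X \<subseteq> Y \<union> Z" using that by blast
    hence "measure M X \<le> measure M (Y \<union> Z)" by (intro measure_pmf.finite_measure_mono) auto
    also have "\<dots> \<le> measure M Y + measure M Z" by (rule measure_Un_le) auto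
    finally show ?thesis .
  qed
  have "measure M A \<le> measure M B + measure M Z" using ab assms by blast
  moreover have "measure M B \<le> measure M A + measure M Z" using ab assms by blast
  ultimately show ?thesis by linarith
qed

definition Zs :: "nat \<Rightarrow> (nat \<times> nat \<Rightarrow> bool) set" where
  "Zs n = {\<xi>. \<exists>i<n. (\<Sum>j<n. of_bool (\<xi> (i,j)) :: real) = 0}"

lemma PZ_bound:
  assumes p: "p \<in> {0..1}"
  shows "measure_pmf.prob (bernoulli_array n p) (Zs n) \<le> real n * (1-p)^n"
proof -
  let ?M = "bernoulli_array n p"
  let ?A = "\<lambda>i. {\<xi>. card ({..<n} \<inter> {j. \<xi> (i,j)}) = 0}"
  have "Zs n = (\<Union>i\<in>{..<n}. ?A i)" unfolding Zs_def by auto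
  hence "measure_pmf.prob ?M (Zs n) \<le> (\<Sum>i\<in>{..<n}. measure_pmf.prob ?M (?A i))"
    by (simp add: measure_pmf.finite_measure_subadditive_finite)
  also have "\<dots> = (\<Sum>i\<in>{..<n}. (1-p)^n)"
  proof (intro sum.cong refl)
    fix i assume i: "i \<in> {..<n}"
    have "measure_pmf.prob ?M (?A i) = measure_pmf.prob (map_pmf (\<lambda>\<xi>. card ({..<n} \<inter> {j. \<xi> (i,j)})) ?M) {0}"
      by (simp add: vimage_def)
    also have "\<dots> = pmf (binomial_pmf n p) 0" using i p by (subst row_law) (auto simp: measure_pmf_single)
    also have "\<dots> = (1-p)^n" using p by simp
    finally show "measure_pmf.prob ?M (?A i) = (1-p)^n" .
  qed
  also have "\<dots> = real n * (1-p)^n" by simp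
  finally show ?thesis .
qed

context
  fixes p :: real
  assumes p0: "0 < p" and p1: "p < 1"
begin

private lemma pp_P9[simp]: "p \<in> {0..1}" "0 \<le> p" "p \<le> 1" using p0 p1 by auto

lemma PZ_lim: "(\<lambda>n. measure_pmf.prob (bernoulli_array n p) (Zs n)) \<longlonglongrightarrow> 0"
proof -
  have l: "(\<lambda>n. real n * (1-p)^n) \<longlonglongrightarrow> 0" using p0 p1 by real_asymp
  show ?thesis
    by (rule Lim_null_comparison[OF _ l]) (auto intro!: always_eventually PZ_bound)
qed

lemma H_outside:
  assumes n: "n \<ge> 1" and xi: "\<xi> \<notin> Zs n"
  shows "H_hat n p \<xi> = exp (mu0 p + sg p * Wn n p \<xi>)"
proof -
  let ?s = "\<lambda>i. (\<Sum>j<n. of_bool (\<xi> (i,j)) :: real)"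
  have spos: "?s i > 0" if "i < n" for i
  proof -
    have "?s i \<ge> 0" by (intro sum_nonneg) auto
    moreover have "?s i \<noteq> 0" using xi that unfolding Zs_def by auto
    ultimately show ?thesis by linarith
  qed
  have np: "real n * p > 0" using n p0 by simp
  define L where "L = (\<Sum>i<n. ln (?s i / (real n * p)))"
  have "H_hat n p \<xi> = (\<Prod>i<n. exp (ln (?s i / (real n * p))))"
    unfolding H_hat_def by (intro prod.cong refl) (use spos np in auto)
  also have "\<dots> = exp L" unfolding L_def by (simp add: exp_sum)
  finally have H: "H_hat n p \<xi> = exp L" .
  have "Wn n p \<xi> = (\<Sum>i<n. (ln (?s i / (real n * p)) - mu0 p / real n) / sg p)"
    unfolding Wn_def xr_def by (intro sum.cong refl) (use spos in auto)
  also have "\<dots> = (L - real n * (mu0 p / real n)) / sg p"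
    unfolding L_def by (simp add: sum_divide_distrib[symmetric] sum_subtractf)
  also have "\<dots> = (L - mu0 p) / sg p" using n by simp
  finally have "sg p * Wn n p \<xi> = L - mu0 p" using sg_pos[OF p0 p1] by simp
  thus ?thesis unfolding H by simp
qed

lemma H_nonneg: "H_hat n p \<xi> \<ge> 0"
  unfolding H_hat_def using p0 by (intro prod_nonneg divide_nonneg_nonneg sum_nonneg) auto

lemma main_cdf:
  defines "T \<equiv> distr (density lborel (normal_density (mu0 p) (sg p))) borel exp"
  shows "(\<lambda>n. cdf (H_hat_law p n) x) \<longlonglongrightarrow> cdf T x"
proof -
  let ?M = "\<lambda>n. bernoulli_array n p"
  let ?P = "\<lambda>n A. measure_pmf.prob (?M n) A"
  have cdfH: "cdf (H_hat_law p n) x = ?P n {\<xi>. H_hat n p \<xi> \<le> x}" for n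
    unfolding cdf_def H_hat_law_def by (simp add: vimage_def)
  have cdfT: "cdf T x = measure (density lborel (normal_density (mu0 p) (sg p))) {y. exp y \<le> x}"
    unfolding cdf_def T_def by (subst measure_distr) (auto simp: vimage_def)
  have levy: "weak_conv_m (\<lambda>n. law n p) std_normal_distribution"
    by (intro levy_continuity real_distribution_law real_dist_normal_dist char_law_conv p0 p1)
  have W: "(\<lambda>n. ?P n {\<xi>. Wn n p \<xi> \<le> y}) \<longlonglongrightarrow> cdf std_normal_distribution y" for y
  proof -
    have "(\<lambda>n. cdf (law n p) y) \<longlonglongrightarrow> cdf std_normal_distribution y"
      using levy std_cdf_cont unfolding weak_conv_m_def weak_conv_def by blast
    moreover have "cdf (law n p) y = ?P n {\<xi>. Wn n p \<xi> \<le> y}" for n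
      unfolding cdf_def law_def by (subst measure_distr) (auto simp: vimage_def)
    ultimately show ?thesis by simp
  qed
  show ?thesis
  proof (cases "x > 0")
    case True
    define c where "c = (ln x - mu0 p) / sg p"
    have eqT: "cdf T x = cdf std_normal_distribution c"
    proof -
      have "{y. exp y \<le> x} = {..ln x}" using True by (auto simp: ln_ge_iff)
      hence "cdf T x = measure (density lborel (normal_density (mu0 p) (sg p))) {..ln x}" using cdfT by simp
      also have "\<dots> = cdf std_normal_distribution c"
        unfolding c_def cdf_def by (rule normal_cdf_conv[OF sg_pos[OF p0 p1]])
      finally show ?thesis .
    qed
    have setd: "{\<xi>. H_hat n p \<xi> \<le> x} - Zs n = {\<xi>. Wn n p \<xi> \<le> c} - Zs n" if n: "n \<ge> 1" for n
    proof -
      have "H_hat n p \<xi> \<le> x \<longleftrightarrow> Wn n p \<xi> \<le> c" if "\<xi> \<notin> Zs n" for \<xi>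
      proof -
        have "H_hat n p \<xi> \<le> x \<longleftrightarrow> mu0 p + sg p * Wn n p \<xi> \<le> ln x"
          unfolding H_outside[OF n that] using True by (simp add: ln_ge_iff)
        also have "\<dots> \<longleftrightarrow> Wn n p \<xi> \<le> c"
          unfolding c_def using sg_pos[OF p0 p1] by (simp add: field_simps)
        finally show ?thesis .
      qed
      thus ?thesis by auto
    qed
    have "(\<lambda>n. ?P n {\<xi>. H_hat n p \<xi> \<le> x} - ?P n {\<xi>. Wn n p \<xi> \<le> c}) \<longlonglongrightarrow> 0"
    proof (rule Lim_null_comparison[OF _ PZ_lim])
      show "\<forall>\<^sub>F n in sequentially. norm (?P n {\<xi>. H_hat n p \<xi> \<le> x} - ?P n {\<xi>. Wn n p \<xi> \<le> c}) \<le> ?P n (Zs n)"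
        using eventually_ge_at_top[of 1] by eventually_elim (simp only: real_norm_def; rule pmf_diff_bound; rule setd; simp)
    qed
    hence "(\<lambda>n. (?P n {\<xi>. H_hat n p \<xi> \<le> x} - ?P n {\<xi>. Wn n p \<xi> \<le> c}) + ?P n {\<xi>. Wn n p \<xi> \<le> c})
       \<longlonglongrightarrow> 0 + cdf std_normal_distribution c"
      by (intro tendsto_add W)
    thus ?thesis unfolding cdfH eqT by simp
  next
    case False
    have eqT: "cdf T x = 0"
    proof -
      have "{y. exp y \<le> x} = {}" using False by (auto simp: not_less) (meson exp_gt_zero order.strict_trans1 not_le)
      thus ?thesis using cdfT by simp
    qed
    have sub: "{\<xi>. H_hat n p \<xi> \<le> x} \<subseteq> Zs n" if n: "n \<ge> 1" for n
    proof
      fix \<xi> assume "\<xi> \<in> {\<xi>. H_hat n p \<xi> \<le> x}"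
      hence h: "H_hat n p \<xi> \<le> x" by simp
      show "\<xi> \<in> Zs n"
      proof (rule ccontr)
        assume "\<xi> \<notin> Zs n"
        hence "H_hat n p \<xi> > 0" using H_outside[OF n] by simp
        thus False using h False by simp
      qed
    qed
    have "(\<lambda>n. ?P n {\<xi>. H_hat n p \<xi> \<le> x}) \<longlonglongrightarrow> 0"
    proof (rule Lim_null_comparison[OF _ PZ_lim])
      show "\<forall>\<^sub>F n in sequentially. norm (?P n {\<xi>. H_hat n p \<xi> \<le> x}) \<le> ?P n (Zs n)"
        using eventually_ge_at_top[of 1]
        by eventually_elim (use sub in \<open>auto intro!: measure_pmf.finite_measure_mono\<close>)
    qed
    thus ?thesis unfolding cdfH eqT .
  qed
qed

end

theorem mainTheorem7:
  fixes p :: real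
  assumes "0 < p" and "p < 1"
  shows "weak_conv_m (H_hat_law p)
           (distr (density lborel (normal_density (- (1 - p) / (2 * p)) (sqrt ((1 - p) / p))))
                  borel exp)"
  using main_cdf[OF assms] unfolding weak_conv_m_def weak_conv_def mu0_def sg_def by blast


end
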